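(* Let $T$ be a first-order $\mathscr L$-theory and $A$ a model of $T_\forall$. Then $A$ is existentially closed in $\mathcal U_{\mathcal K}=\mathrm{Mod}(T_\forall)$ if and only if $A^*$ is geometrically closed in $\mathcal U_{\mathcal K}^*=\mathrm{Mod}(T_\forall\cup\emptyset^* )$.
   Context: $T_\forall$: consequences of $T$ of the form $\forall\bar y(\bigwedge\Phi\to\bigvee\Psi)$, $\Phi,\Psi$ finite sets of atomic formulas. $A$ is existentially closed in a class $\mathcal C$ if every embedding of $A$ into a member of $\mathcal C$ reflects existential sentences with parameters from $A$. $\mathscr L^*$ is $\mathscr L$ plus, for each relation symbol $R$ of $\mathscr L$, a new relation symbol $R^*$ of the same arity; $\emptyset^*$ is the set of axioms $\forall\bar x(\neg R(\bar x)\leftrightarrow R^*(\bar x))$; $T^*=T\cup\emptyset^*$ (and $T_\forall\cup\emptyset^*$ is equivalent to $(T^* )_\forall$). $A^*$ is the expansion of $A$ interpreting each $R^*$ as the complement of $R$. A homomorphism $f:C\to D$ is geometrically closed if every sentence $\forall\bar y\,(\bigwedge\Phi(\bar c,\bar y)\to\psi(\bar c,\bar y))$ ($\Phi\cup\{\psi\}$ finite sets of atomic formulas, parameters from $C$) true in $C$ holds in $D$ of $f\bar c$; $C$ is geometrically closed in a class if every homomorphism from $C$ to a member of that class is. *)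

theory Defs
  imports Main
begin

text \<open>A language is given by arity functions; every element of the types of
function symbols 'f and relation symbols 'r is a symbol of the language.\<close>

datatype ('f, 'r) lang = Lang (farity: "'f \<Rightarrow> nat") (rarity: "'r \<Rightarrow> nat")

datatype 'f trm = Var nat | Fn 'f "'f trm list"

datatype ('f, 'r) fm =
    Bot
  | Eq "'f trm" "'f trm"
  | Rel 'r "'f trm list"
  | Neg "('f, 'r) fm"
  | Conj "('f, 'r) fm" "('f, 'r) fm"
  | Disj "('f, 'r) fm" "('f, 'r) fm"
  | Imp "('f, 'r) fm" "('f, 'r) fm"
  | Ex nat "('f, 'r) fm"
  | All nat "('f, 'r) fm"

definition Iff :: "('f, 'r) fm \<Rightarrow> ('f, 'r) fm \<Rightarrow> ('f, 'r) fm" where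
  "Iff p q = Conj (Imp p q) (Imp q p)"

definition Top :: "('f, 'r) fm" where
  "Top = Neg Bot"

fun conjs :: "('f, 'r) fm list \<Rightarrow> ('f, 'r) fm" where
  "conjs [] = Top"
| "conjs (p # ps) = Conj p (conjs ps)"

fun disjs :: "('f, 'r) fm list \<Rightarrow> ('f, 'r) fm" where
  "disjs [] = Bot"
| "disjs (p # ps) = Disj p (disjs ps)"

fun fvt :: "'f trm \<Rightarrow> nat set" where
  "fvt (Var n) = {n}"
| "fvt (Fn f ts) = \<Union> (set (map fvt ts))"

fun fv :: "('f, 'r) fm \<Rightarrow> nat set" where
  "fv Bot = {}"
| "fv (Eq s t) = fvt s \<union> fvt t"
| "fv (Rel r ts) = \<Union> (set (map fvt ts))"
| "fv (Neg p) = fv p"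
| "fv (Conj p q) = fv p \<union> fv q"
| "fv (Disj p q) = fv p \<union> fv q"
| "fv (Imp p q) = fv p \<union> fv q"
| "fv (Ex x p) = fv p - {x}"
| "fv (All x p) = fv p - {x}"

fun wf_trm :: "('f, 'r) lang \<Rightarrow> 'f trm \<Rightarrow> bool" where
  "wf_trm L (Var n) = True"
| "wf_trm L (Fn f ts) = (length ts = farity L f \<and> list_all (wf_trm L) ts)"

fun wf_fm :: "('f, 'r) lang \<Rightarrow> ('f, 'r) fm \<Rightarrow> bool" where
  "wf_fm L Bot = True"
| "wf_fm L (Eq s t) = (wf_trm L s \<and> wf_trm L t)"
| "wf_fm L (Rel r ts) = (length ts = rarity L r \<and> list_all (wf_trm L) ts)"
| "wf_fm L (Neg p) = wf_fm L p"
| "wf_fm L (Conj p q) = (wf_fm L p \<and> wf_fm L q)"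
| "wf_fm L (Disj p q) = (wf_fm L p \<and> wf_fm L q)"
| "wf_fm L (Imp p q) = (wf_fm L p \<and> wf_fm L q)"
| "wf_fm L (Ex x p) = wf_fm L p"
| "wf_fm L (All x p) = wf_fm L p"

definition sentence :: "('f, 'r) lang \<Rightarrow> ('f, 'r) fm \<Rightarrow> bool" where
  "sentence L p \<longleftrightarrow> wf_fm L p \<and> fv p = {}"

definition theory_of :: "('f, 'r) lang \<Rightarrow> ('f, 'r) fm set \<Rightarrow> bool" where
  "theory_of L T \<longleftrightarrow> (\<forall>p\<in>T. sentence L p)"

fun atomic :: "('f, 'r) fm \<Rightarrow> bool" where
  "atomic Bot = True"
| "atomic (Eq s t) = True"
| "atomic (Rel r ts) = True"
| "atomic _ = False"

fun qfree :: "('f, 'r) fm \<Rightarrow> bool" where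
  "qfree (Ex x p) = False"
| "qfree (All x p) = False"
| "qfree (Neg p) = qfree p"
| "qfree (Conj p q) = (qfree p \<and> qfree q)"
| "qfree (Disj p q) = (qfree p \<and> qfree q)"
| "qfree (Imp p q) = (qfree p \<and> qfree q)"
| "qfree _ = True"

definition existential :: "('f, 'r) fm \<Rightarrow> bool" where
  "existential p \<longleftrightarrow> (\<exists>ys q. qfree q \<and> p = foldr Ex ys q)"

definition univ_geom_sentences :: "('f, 'r) lang \<Rightarrow> ('f, 'r) fm set" where
  "univ_geom_sentences L =
     {p. sentence L p \<and>
         (\<exists>ys Phi Psi. (\<forall>a\<in>set Phi \<union> set Psi. atomic a) \<and>
                       p = foldr All ys (Imp (conjs Phi) (disjs Psi)))}"

datatype ('a, 'f, 'r) struc =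
  Struc (dom: "'a set") (fint: "'f \<Rightarrow> 'a list \<Rightarrow> 'a") (rint: "'r \<Rightarrow> 'a list \<Rightarrow> bool")

definition is_struc :: "('f, 'r) lang \<Rightarrow> ('a, 'f, 'r) struc \<Rightarrow> bool" where
  "is_struc L M \<longleftrightarrow> dom M \<noteq> {} \<and>
     (\<forall>f xs. length xs = farity L f \<and> set xs \<subseteq> dom M \<longrightarrow> fint M f xs \<in> dom M)"

fun eval :: "('a, 'f, 'r) struc \<Rightarrow> (nat \<Rightarrow> 'a) \<Rightarrow> 'f trm \<Rightarrow> 'a" where
  "eval M e (Var n) = e n"
| "eval M e (Fn f ts) = fint M f (map (eval M e) ts)"

fun sat :: "('a, 'f, 'r) struc \<Rightarrow> (nat \<Rightarrow> 'a) \<Rightarrow> ('f, 'r) fm \<Rightarrow> bool" where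
  "sat M e Bot = False"
| "sat M e (Eq s t) = (eval M e s = eval M e t)"
| "sat M e (Rel r ts) = rint M r (map (eval M e) ts)"
| "sat M e (Neg p) = (\<not> sat M e p)"
| "sat M e (Conj p q) = (sat M e p \<and> sat M e q)"
| "sat M e (Disj p q) = (sat M e p \<or> sat M e q)"
| "sat M e (Imp p q) = (sat M e p \<longrightarrow> sat M e q)"
| "sat M e (Ex x p) = (\<exists>a\<in>dom M. sat M (e(x := a)) p)"
| "sat M e (All x p) = (\<forall>a\<in>dom M. sat M (e(x := a)) p)"

definition assignment :: "('a, 'f, 'r) struc \<Rightarrow> (nat \<Rightarrow> 'a) \<Rightarrow> bool" where
  "assignment M e \<longleftrightarrow> (\<forall>n. e n \<in> dom M)"

definition models :: "('f, 'r) lang \<Rightarrow> ('a, 'f, 'r) struc \<Rightarrow> ('f, 'r) fm set \<Rightarrow> bool" where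
  "models L M T \<longleftrightarrow> is_struc L M \<and> (\<forall>p\<in>T. \<forall>e. assignment M e \<longrightarrow> sat M e p)"

text \<open>The class \<open>Mod(T)\<close> of models whose carriers live in the type 'a.\<close>
definition Mod :: "('f, 'r) lang \<Rightarrow> ('f, 'r) fm set \<Rightarrow> ('a, 'f, 'r) struc set" where
  "Mod L T = {M. models L M T}"

text \<open>By the downward Loewenheim-Skolem theorem it
suffices to test structures of cardinality at most \<open>|L| + \<aleph>\<^sub>0\<close>; every such
structure is isomorphic to one whose carrier lies in the type below, so this is
exactly \<open>T \<Turnstile> p\<close>.\<close>
type_synonym ('f, 'r) canon = "('f + 'r + nat) list"

definition entails :: "('f, 'r) lang \<Rightarrow> ('f, 'r) fm set \<Rightarrow> ('f, 'r) fm \<Rightarrow> bool" where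
  "entails L T p \<longleftrightarrow>
     (\<forall>M :: (('f, 'r) canon, 'f, 'r) struc. models L M T \<longrightarrow> models L M {p})"

definition Tforall :: "('f, 'r) lang \<Rightarrow> ('f, 'r) fm set \<Rightarrow> ('f, 'r) fm set" where
  "Tforall L T = {p \<in> univ_geom_sentences L. entails L T p}"

definition embedding ::
  "('f, 'r) lang \<Rightarrow> ('a \<Rightarrow> 'b) \<Rightarrow> ('a, 'f, 'r) struc \<Rightarrow> ('b, 'f, 'r) struc \<Rightarrow> bool" where
  "embedding L h A B \<longleftrightarrow>
     h ` dom A \<subseteq> dom B \<and> inj_on h (dom A) \<and>
     (\<forall>f xs. length xs = farity L f \<and> set xs \<subseteq> dom A \<longrightarrow>
            h (fint A f xs) = fint B f (map h xs)) \<and>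
     (\<forall>r xs. length xs = rarity L r \<and> set xs \<subseteq> dom A \<longrightarrow>
            (rint B r (map h xs) \<longleftrightarrow> rint A r xs))"

definition homomorphism ::
  "('f, 'r) lang \<Rightarrow> ('a \<Rightarrow> 'b) \<Rightarrow> ('a, 'f, 'r) struc \<Rightarrow> ('b, 'f, 'r) struc \<Rightarrow> bool" where
  "homomorphism L h A B \<longleftrightarrow>
     h ` dom A \<subseteq> dom B \<and>
     (\<forall>f xs. length xs = farity L f \<and> set xs \<subseteq> dom A \<longrightarrow>
            h (fint A f xs) = fint B f (map h xs)) \<and>
     (\<forall>r xs. length xs = rarity L r \<and> set xs \<subseteq> dom A \<longrightarrow>
            rint A r xs \<longrightarrow> rint B r (map h xs))"

definition ec_in :: "('f, 'r) lang \<Rightarrow> ('a, 'f, 'r) struc \<Rightarrow> ('b, 'f, 'r) struc set \<Rightarrow> bool" where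
  "ec_in L A K \<longleftrightarrow>
     (\<forall>B\<in>K. \<forall>h. embedding L h A B \<longrightarrow>
        (\<forall>p e. wf_fm L p \<and> existential p \<and> assignment A e \<longrightarrow>
               sat B (h \<circ> e) p \<longrightarrow> sat A e p))"

definition geom_closed_hom ::
  "('f, 'r) lang \<Rightarrow> ('a \<Rightarrow> 'b) \<Rightarrow> ('a, 'f, 'r) struc \<Rightarrow> ('b, 'f, 'r) struc \<Rightarrow> bool" where
  "geom_closed_hom L h C D \<longleftrightarrow>
     homomorphism L h C D \<and>
     (\<forall>ys Phi psi e. (\<forall>a\<in>set (psi # Phi). atomic a \<and> wf_fm L a) \<and> assignment C e \<longrightarrow>
        sat C e (foldr All ys (Imp (conjs Phi) psi)) \<longrightarrow>
        sat D (h \<circ> e) (foldr All ys (Imp (conjs Phi) psi)))"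

definition gc_in :: "('f, 'r) lang \<Rightarrow> ('a, 'f, 'r) struc \<Rightarrow> ('b, 'f, 'r) struc set \<Rightarrow> bool" where
  "gc_in L C K \<longleftrightarrow>
     (\<forall>D\<in>K. \<forall>h. homomorphism L h C D \<longrightarrow> geom_closed_hom L h C D)"

text \<open>Relation symbols of \<open>L\<^sup>*\<close>: the original ones, a complement \<open>R\<^sup>*\<close> for
each relation symbol R, and a complement symbol for equality (equality being
regarded as a relation symbol of L, whose star is \<open>\<noteq>\<close>).\<close>
datatype 'r srel = Base 'r | Co 'r | NotEq

fun srarity :: "('r \<Rightarrow> nat) \<Rightarrow> 'r srel \<Rightarrow> nat" where
  "srarity ar (Base r) = ar r"
| "srarity ar (Co r) = ar r"
| "srarity ar NotEq = 2"

definition Lstar :: "('f, 'r) lang \<Rightarrow> ('f, 'r srel) lang" where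
  "Lstar L = Lang (farity L) (srarity (rarity L))"

definition star :: "('a, 'f, 'r) struc \<Rightarrow> ('a, 'f, 'r srel) struc" where
  "star A = Struc (dom A) (fint A)
     (\<lambda>s xs. case s of
        Base r \<Rightarrow> rint A r xs
      | Co r \<Rightarrow> \<not> rint A r xs
      | NotEq \<Rightarrow> (case xs of [a, b] \<Rightarrow> a \<noteq> b | _ \<Rightarrow> False))"

definition lift_fm :: "('f, 'r) fm \<Rightarrow> ('f, 'r srel) fm" where
  "lift_fm p = map_fm id Base p"

definition empty_star :: "('f, 'r) lang \<Rightarrow> ('f, 'r srel) fm set" where
  "empty_star L =
     {foldr All [0..<rarity L r]
        (Iff (Neg (Rel (Base r) (map Var [0..<rarity L r])))
             (Rel (Co r) (map Var [0..<rarity L r]))) | r. True}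
   \<union> {All 0 (All 1 (Iff (Neg (Eq (Var 0) (Var 1))) (Rel NotEq [Var 0, Var 1])))}"

end

theory Submission
  imports Defs
begin

lemma foldr_All_sat:
  "sat M e (foldr All ys p) \<longleftrightarrow>
   (\<forall>e'. (\<forall>v. v \<notin> set ys \<longrightarrow> e' v = e v) \<and> (\<forall>v\<in>set ys. e' v \<in> dom M) \<longrightarrow> sat M e' p)"
proof (induction ys arbitrary: e)
  case Nil
  then show ?case by auto
next
  case (Cons y ys)
  show ?case
  proof
    assume H: "sat M e (foldr All (y # ys) p)"
    show "\<forall>e'. (\<forall>v. v \<notin> set (y # ys) \<longrightarrow> e' v = e v) \<and> (\<forall>v\<in>set (y # ys). e' v \<in> dom M) \<longrightarrow> sat M e' p"
    proof (intro allI impI)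
      fix e' assume A: "(\<forall>v. v \<notin> set (y # ys) \<longrightarrow> e' v = e v) \<and> (\<forall>v\<in>set (y # ys). e' v \<in> dom M)"
      have "e' y \<in> dom M" using A by auto
      with H have "sat M (e(y := e' y)) (foldr All ys p)" by simp
      then have AL: "\<forall>e''. (\<forall>v. v \<notin> set ys \<longrightarrow> e'' v = (e(y := e' y)) v) \<and> (\<forall>v\<in>set ys. e'' v \<in> dom M) \<longrightarrow> sat M e'' p"
        using Cons.IH[of "e(y := e' y)"] by blast
      have "(\<forall>v. v \<notin> set ys \<longrightarrow> e' v = (e(y := e' y)) v) \<and> (\<forall>v\<in>set ys. e' v \<in> dom M)"
        using A by auto
      with AL show "sat M e' p" by blast
    qed
  next
    assume H: "\<forall>e'. (\<forall>v. v \<notin> set (y # ys) \<longrightarrow> e' v = e v) \<and> (\<forall>v\<in>set (y # ys). e' v \<in> dom M) \<longrightarrow> sat M e' p"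
    show "sat M e (foldr All (y # ys) p)"
    proof (simp, intro ballI)
      fix a assume a: "a \<in> dom M"
      show "sat M (e(y := a)) (foldr All ys p)"
        unfolding Cons.IH
      proof (intro allI impI)
        fix e' assume A: "(\<forall>v. v \<notin> set ys \<longrightarrow> e' v = (e(y := a)) v) \<and> (\<forall>v\<in>set ys. e' v \<in> dom M)"
        have "\<forall>v. v \<notin> set (y # ys) \<longrightarrow> e' v = e v" using A by simp
        moreover have "\<forall>v\<in>set (y # ys). e' v \<in> dom M"
        proof
          fix v assume "v \<in> set (y # ys)"
          then show "e' v \<in> dom M" using A a by (cases "v \<in> set ys") auto
        qed
        ultimately have "(\<forall>v. v \<notin> set (y # ys) \<longrightarrow> e' v = e v) \<and> (\<forall>v\<in>set (y # ys). e' v \<in> dom M)" by blast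
        with H show "sat M e' p" by blast
      qed
    qed
  qed
qed

lemma foldr_Ex_sat:
  "sat M e (foldr Ex ys p) \<longleftrightarrow>
   (\<exists>e'. (\<forall>v. v \<notin> set ys \<longrightarrow> e' v = e v) \<and> (\<forall>v\<in>set ys. e' v \<in> dom M) \<and> sat M e' p)"
proof (induction ys arbitrary: e)
  case Nil
  then show ?case by (auto simp flip: fun_eq_iff)
next
  case (Cons y ys)
  show ?case
  proof
    assume "sat M e (foldr Ex (y # ys) p)"
    then obtain a where a: "a \<in> dom M" and "sat M (e(y := a)) (foldr Ex ys p)" by auto
    then obtain e' where A: "(\<forall>v. v \<notin> set ys \<longrightarrow> e' v = (e(y := a)) v) \<and> (\<forall>v\<in>set ys. e' v \<in> dom M) \<and> sat M e' p"
      using Cons.IH by blast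
    have "\<forall>v. v \<notin> set (y # ys) \<longrightarrow> e' v = e v" using A by simp
    moreover have "\<forall>v\<in>set (y # ys). e' v \<in> dom M"
    proof
      fix v assume "v \<in> set (y # ys)"
      then show "e' v \<in> dom M" using A a by (cases "v \<in> set ys") auto
    qed
    ultimately have "(\<forall>v. v \<notin> set (y # ys) \<longrightarrow> e' v = e v) \<and> (\<forall>v\<in>set (y # ys). e' v \<in> dom M) \<and> sat M e' p" using A by blast
    then show "\<exists>e'. (\<forall>v. v \<notin> set (y # ys) \<longrightarrow> e' v = e v) \<and> (\<forall>v\<in>set (y # ys). e' v \<in> dom M) \<and> sat M e' p" by blast
  next
    assume "\<exists>e'. (\<forall>v. v \<notin> set (y # ys) \<longrightarrow> e' v = e v) \<and> (\<forall>v\<in>set (y # ys). e' v \<in> dom M) \<and> sat M e' p"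
    then obtain e' where A: "(\<forall>v. v \<notin> set (y # ys) \<longrightarrow> e' v = e v) \<and> (\<forall>v\<in>set (y # ys). e' v \<in> dom M) \<and> sat M e' p" by blast
    have "e' y \<in> dom M" using A by auto
    moreover have "sat M (e(y := e' y)) (foldr Ex ys p)"
      unfolding Cons.IH using A by (intro exI[of _ e']) auto
    ultimately show "sat M e (foldr Ex (y # ys) p)" by auto
  qed
qed

lemma sat_conjs: "sat M e (conjs ps) \<longleftrightarrow> (\<forall>p\<in>set ps. sat M e p)"
  by (induction ps) (auto simp: Top_def)

lemma qfree_conjs: "\<forall>p\<in>set ps. qfree p \<Longrightarrow> qfree (conjs ps)"
  by (induction ps) (auto simp: Top_def)

lemma wf_conjs: "\<forall>p\<in>set ps. wf_fm L p \<Longrightarrow> wf_fm L (conjs ps)"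
  by (induction ps) (auto simp: Top_def)

lemma dom_star[simp]: "dom (star M) = dom M" by (simp add: star_def)
lemma fint_star[simp]: "fint (star M) = fint M" by (simp add: star_def)
lemma rint_star[simp]: "rint (star M) s xs = (case s of
        Base r \<Rightarrow> rint M r xs
      | Co r \<Rightarrow> \<not> rint M r xs
      | NotEq \<Rightarrow> (case xs of [a, b] \<Rightarrow> a \<noteq> b | _ \<Rightarrow> False))" by (simp add: star_def)

lemma eval_star0: "eval (star M) e t = eval M e t"
  by (induction t) (auto cong: map_cong)

lemma eval_star[simp]: "eval (star M) e = eval M e"
  using eval_star0 by blast

definition red :: "('a, 'f, 'r srel) struc \<Rightarrow> ('a, 'f, 'r) struc" where
  "red D = Struc (dom D) (fint D) (\<lambda>r xs. rint D (Base r) xs)"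

lemma dom_red[simp]: "dom (red D) = dom D" by (simp add: red_def)

lemma eval_red0: "eval (red D) e t = eval D e t"
  by (induction t) (auto simp: red_def cong: map_cong)

lemma eval_red[simp]: "eval (red D) e = eval D e"
  using eval_red0 by blast

lemma rint_red[simp]: "rint (red D) r xs = rint D (Base r) xs" by (simp add: red_def)

lemma sat_lift: "sat D e (lift_fm p) = sat (red D) e p"
  by (induction p arbitrary: e) (auto simp: lift_fm_def trm.map_id0)

lemma red_star[simp]: "red (star M) = M"
  by (cases M) (simp add: red_def star_def)

lemma farity_Lstar[simp]: "farity (Lstar L) = farity L" by (simp add: Lstar_def)
lemma rarity_Lstar[simp]: "rarity (Lstar L) = srarity (rarity L)" by (simp add: Lstar_def)

lemma wf_trm_Lstar0: "wf_trm (Lstar L) t = wf_trm L t"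
  by (induction t) (auto simp: list_all_iff)

lemma wf_trm_Lstar[simp]: "wf_trm (Lstar L) = wf_trm L"
  using wf_trm_Lstar0 by blast

lemma wf_foldr_Ex: "wf_fm L (foldr Ex ys q) \<Longrightarrow> wf_fm L q"
  by (induction ys) auto

lemma eval_in_dom: "is_struc L M \<Longrightarrow> assignment M e \<Longrightarrow> wf_trm L t \<Longrightarrow> eval M e t \<in> dom M"
proof (induction t)
  case (Var n) then show ?case by (simp add: assignment_def)
next
  case (Fn f ts)
  then have "set (map (eval M e) ts) \<subseteq> dom M" by (auto simp: list_all_iff)
  with Fn show ?case by (auto simp: is_struc_def)
qed

section \<open>CNF\<close>

definition prodc :: "'x list list \<Rightarrow> 'x list list \<Rightarrow> 'x list list" where
  "prodc xs ys = concat (map (\<lambda>c. map (\<lambda>d. c @ d) ys) xs)"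

fun cnf :: "bool \<Rightarrow> ('f, 'r) fm \<Rightarrow> (bool \<times> ('f, 'r) fm) list list" where
  "cnf b Bot = (if b then [[]] else [])"
| "cnf b (Eq s t) = [[(b, Eq s t)]]"
| "cnf b (Rel r ts) = [[(b, Rel r ts)]]"
| "cnf b (Neg p) = cnf (\<not> b) p"
| "cnf b (Conj p q) = (if b then cnf True p @ cnf True q else prodc (cnf False p) (cnf False q))"
| "cnf b (Disj p q) = (if b then prodc (cnf True p) (cnf True q) else cnf False p @ cnf False q)"
| "cnf b (Imp p q) = (if b then prodc (cnf False p) (cnf True q) else cnf True p @ cnf False q)"
| "cnf b (Ex x p) = []"
| "cnf b (All x p) = []"

definition clsat :: "('a, 'f, 'r) struc \<Rightarrow> (nat \<Rightarrow> 'a) \<Rightarrow> (bool \<times> ('f, 'r) fm) list \<Rightarrow> bool" where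
  "clsat M e c = (\<exists>l\<in>set c. sat M e (snd l) = fst l)"

definition cnfsat :: "('a, 'f, 'r) struc \<Rightarrow> (nat \<Rightarrow> 'a) \<Rightarrow> (bool \<times> ('f, 'r) fm) list list \<Rightarrow> bool" where
  "cnfsat M e cs = (\<forall>c\<in>set cs. clsat M e c)"

lemma mem_prodc: "c \<in> set (prodc xs ys) \<longleftrightarrow> (\<exists>c1\<in>set xs. \<exists>c2\<in>set ys. c = c1 @ c2)"
  by (auto simp: prodc_def)

lemma clsat_append: "clsat M e (c @ d) \<longleftrightarrow> clsat M e c \<or> clsat M e d"
  unfolding clsat_def by auto

lemma cnfsat_prodc: "cnfsat M e (prodc xs ys) \<longleftrightarrow> cnfsat M e xs \<or> cnfsat M e ys"
proof
  assume H: "cnfsat M e (prodc xs ys)"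
  show "cnfsat M e xs \<or> cnfsat M e ys"
  proof (rule ccontr)
    assume "\<not> (cnfsat M e xs \<or> cnfsat M e ys)"
    then obtain c1 c2 where c: "c1 \<in> set xs" "c2 \<in> set ys" "\<not> clsat M e c1" "\<not> clsat M e c2"
      unfolding cnfsat_def by blast
    then have "c1 @ c2 \<in> set (prodc xs ys)" unfolding mem_prodc by blast
    with H have "clsat M e (c1 @ c2)" unfolding cnfsat_def by blast
    with c show False unfolding clsat_append by blast
  qed
next
  assume "cnfsat M e xs \<or> cnfsat M e ys"
  then show "cnfsat M e (prodc xs ys)"
    unfolding cnfsat_def
  proof (intro ballI)
    fix c assume H: "(\<forall>c\<in>set xs. clsat M e c) \<or> (\<forall>c\<in>set ys. clsat M e c)" "c \<in> set (prodc xs ys)"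
    then obtain c1 c2 where "c1 \<in> set xs" "c2 \<in> set ys" "c = c1 @ c2" unfolding mem_prodc by blast
    with H(1) show "clsat M e c" by (auto simp: clsat_append)
  qed
qed

lemma cnfsat_single: "cnfsat M e [[l]] \<longleftrightarrow> sat M e (snd l) = fst l"
  by (simp add: cnfsat_def clsat_def)

lemma cnfsat_simps: "cnfsat M e [] = True" "cnfsat M e [[]] = False"
  by (simp_all add: cnfsat_def clsat_def)

lemma cnfsat_append: "cnfsat M e (xs @ ys) \<longleftrightarrow> cnfsat M e xs \<and> cnfsat M e ys"
  unfolding cnfsat_def by auto

lemma cnf_sat: "qfree p \<Longrightarrow> cnfsat M e (cnf b p) \<longleftrightarrow> (sat M e p = b)"
  apply (induction p arbitrary: b)
  apply (simp_all add: cnfsat_prodc cnfsat_append cnfsat_single cnfsat_simps)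
  apply blast
  done

definition okat :: "('f, 'r) lang \<Rightarrow> ('f, 'r) fm \<Rightarrow> bool" where
  "okat L a \<longleftrightarrow> (\<exists>s t. a = Eq s t \<and> wf_trm L s \<and> wf_trm L t) \<or>
                (\<exists>r ts. a = Rel r ts \<and> length ts = rarity L r \<and> list_all (wf_trm L) ts)"

lemma cnf_ok: "wf_fm L p \<Longrightarrow> c \<in> set (cnf b p) \<Longrightarrow> l \<in> set c \<Longrightarrow> okat L (snd l)"
  by (induction p arbitrary: b c) (auto simp: mem_prodc okat_def split: if_splits)

fun pa :: "bool \<Rightarrow> ('f, 'r) fm \<Rightarrow> ('f, 'r srel) fm" where
  "pa True (Eq s t) = Eq s t"
| "pa False (Eq s t) = Rel NotEq [s, t]"
| "pa True (Rel r ts) = Rel (Base r) ts"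
| "pa False (Rel r ts) = Rel (Co r) ts"
| "pa _ _ = Bot"

lemma pa_sat: "okat L a \<Longrightarrow> sat (star M) e (pa b a) = (sat M e a = b)"
  unfolding okat_def
proof (elim disjE exE conjE)
  fix s t assume "a = Eq s t"
  then show ?thesis by (cases b) simp_all
next
  fix r ts assume "a = Rel r ts"
  then show ?thesis by (cases b) simp_all
qed

lemma pa_ok: "okat L a \<Longrightarrow> atomic (pa b a) \<and> wf_fm (Lstar L) (pa b a)"
  unfolding okat_def
proof (elim disjE exE conjE)
  fix s t assume "a = Eq s t" "wf_trm L s" "wf_trm L t"
  then show ?thesis by (cases b) simp_all
next
  fix r ts assume "a = Rel r ts" "length ts = rarity L r" "list_all (wf_trm L) ts"
  then show ?thesis by (cases b) simp_all
qed

definition geo :: "(bool \<times> ('f, 'r) fm) list \<Rightarrow> ('f, 'r srel) fm list \<times> ('f, 'r srel) fm" where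
  "geo c = (if c = [] then ([], Bot)
            else (map (\<lambda>l. pa (\<not> fst l) (snd l)) (butlast c), pa (fst (last c)) (snd (last c))))"

lemma geo_sat:
  assumes "\<forall>l\<in>set c. okat L (snd l)"
  shows "sat (star M) e (Imp (conjs (fst (geo c))) (snd (geo c))) = clsat M e c"
proof (cases c rule: rev_exhaust)
  case Nil then show ?thesis by (simp add: geo_def clsat_def Top_def)
next
  case (snoc c' x)
  have H1: "\<forall>l\<in>set c'. \<forall>b. sat (star M) e (pa b (snd l)) = (sat M e (snd l) = b)"
  proof (intro ballI allI)
    fix l b assume "l \<in> set c'"
    then have "okat L (snd l)" using assms snoc by simp
    then show "sat (star M) e (pa b (snd l)) = (sat M e (snd l) = b)" by (rule pa_sat)
  qed
  have "okat L (snd x)" using assms snoc by simp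
  then have H2: "sat (star M) e (pa (fst x) (snd x)) = (sat M e (snd x) = fst x)" by (rule pa_sat)
  have g: "geo c = (map (\<lambda>l. pa (\<not> fst l) (snd l)) c', pa (fst x) (snd x))"
    by (simp add: geo_def snoc)
  have 1: "(\<forall>p\<in>set (map (\<lambda>l. pa (\<not> fst l) (snd l)) c'). sat (star M) e p) \<longleftrightarrow>
           (\<forall>l\<in>set c'. sat M e (snd l) \<noteq> fst l)"
    using H1 by auto
  have 2: "clsat M e c \<longleftrightarrow> (\<exists>l\<in>set c'. sat M e (snd l) = fst l) \<or> sat M e (snd x) = fst x"
    unfolding clsat_def snoc by (simp only: set_append set_simps Un_insert_right Un_empty_right bex_simps) blast
  show ?thesis unfolding g 2 by (simp only: sat.simps sat_conjs fst_conv snd_conv 1 H2) blast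
qed

lemma geo_ok:
  assumes "\<forall>l\<in>set c. okat L (snd l)"
  shows "\<forall>a\<in>set (snd (geo c) # fst (geo c)). atomic a \<and> wf_fm (Lstar L) a"
proof (cases "c = []")
  case True then show ?thesis by (simp add: geo_def)
next
  case False
  have H: "\<forall>l\<in>set c. \<forall>b. atomic (pa b (snd l)) \<and> wf_fm (Lstar L) (pa b (snd l))"
    using assms pa_ok by blast
  have "last c \<in> set c" using False by simp
  moreover have "set (butlast c) \<subseteq> set c" by (meson in_set_butlastD subsetI)
  ultimately show ?thesis using False H by (auto simp: geo_def)
qed

fun tr :: "('f, 'r srel) fm \<Rightarrow> ('f, 'r) fm" where
  "tr Bot = Bot"
| "tr (Eq s t) = Eq s t"
| "tr (Rel (Base r) ts) = Rel r ts"
| "tr (Rel (Co r) ts) = Neg (Rel r ts)"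
| "tr (Rel NotEq ts) = Neg (Eq (ts ! 0) (ts ! 1))"
| "tr _ = Bot"

lemma len2: "length ts = 2 \<Longrightarrow> \<exists>s t. ts = [s, t]"
  by (metis One_nat_def Suc_1 length_0_conv length_Suc_conv)

lemma tr_qfree: "qfree (tr a)"
  by (induction a rule: tr.induct) auto

lemma tr_wf: "atomic a \<Longrightarrow> wf_fm (Lstar L) a \<Longrightarrow> wf_fm L (tr a)"
proof (induction a rule: tr.induct)
  case (5 ts)
  then obtain s t where "ts = [s, t]" using len2 by fastforce
  with 5 show ?case by simp
qed auto

lemma tr_star: "atomic a \<Longrightarrow> wf_fm (Lstar L) a \<Longrightarrow> sat (star M) e a = sat M e (tr a)"
proof (induction a rule: tr.induct)
  case (5 ts)
  then obtain s t where "ts = [s, t]" using len2 by fastforce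
  then show ?case by simp
qed (auto cong: map_cong)

lemma tr_D:
  assumes st: "is_struc (Lstar L) D"
    and coD: "\<forall>r xs. length xs = rarity L r \<and> set xs \<subseteq> dom D \<longrightarrow> (rint D (Co r) xs \<longleftrightarrow> \<not> rint D (Base r) xs)"
    and neqD: "\<forall>a\<in>dom D. \<forall>b\<in>dom D. rint D NotEq [a, b] \<longleftrightarrow> a \<noteq> b"
    and ae: "assignment D e"
  shows "atomic a \<Longrightarrow> wf_fm (Lstar L) a \<Longrightarrow> sat D e a = sat (red D) e (tr a)"
proof (induction a rule: tr.induct)
  case (3 r ts)
  then show ?case by simp
next
  case (4 r ts)
  then have "set (map (eval D e) ts) \<subseteq> dom D"
    using eval_in_dom[OF st ae] by (auto simp: list_all_iff)
  with 4 coD show ?case by simp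
next
  case (5 ts)
  then obtain s t where ts: "ts = [s, t]" using len2 by fastforce
  with 5 have "eval D e s \<in> dom D" "eval D e t \<in> dom D"
    using eval_in_dom[OF st ae] by auto
  with ts neqD show ?case by simp
qed auto


lemma star_models:
  assumes "models L B S"
  shows "models (Lstar L) (star B) (lift_fm ` S \<union> empty_star L)"
proof -
  have st: "is_struc (Lstar L) (star B)" using assms by (simp add: models_def is_struc_def)
  have "sat (star B) e p" if "p \<in> lift_fm ` S \<union> empty_star L" "assignment (star B) e" for p e
    using that(1)
  proof
    assume "p \<in> lift_fm ` S"
    then obtain q where "q \<in> S" "p = lift_fm q" by blast
    moreover have "assignment B e" using that(2) by (simp add: assignment_def)
    ultimately show ?thesis using assms by (simp add: sat_lift models_def)
  next
    assume "p \<in> empty_star L"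
    then show ?thesis
      by (auto simp: empty_star_def foldr_All_sat Iff_def)
  qed
  with st show ?thesis by (simp add: models_def)
qed

lemma emb_hom:
  assumes "embedding L h A B"
  shows "homomorphism (Lstar L) h (star A) (star B)"
  unfolding homomorphism_def
proof (intro conjI allI impI)
  show "h ` dom (star A) \<subseteq> dom (star B)" using assms by (simp add: embedding_def)
  fix f xs assume "length xs = farity (Lstar L) f \<and> set xs \<subseteq> dom (star A)"
  then show "h (fint (star A) f xs) = fint (star B) f (map h xs)"
    using assms by (simp add: embedding_def)
next
  fix r xs assume H: "length xs = rarity (Lstar L) r \<and> set xs \<subseteq> dom (star A)" "rint (star A) r xs"
  show "rint (star B) r (map h xs)"
  proof (cases r)
    case (Base r')
    with H assms show ?thesis by (auto simp: embedding_def)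
  next
    case (Co r')
    with H assms show ?thesis by (auto simp: embedding_def)
  next
    case NotEq
    with H obtain a b where xs: "xs = [a, b]" using len2 by fastforce
    with H NotEq assms show ?thesis by (auto simp: embedding_def inj_on_def)
  qed
qed

lemma gc_to_ec:
  assumes gc: "gc_in (Lstar L) (star A)
           (Mod (Lstar L) (lift_fm ` S \<union> empty_star L) :: ('b, 'f, 'r srel) struc set)"
  shows "ec_in L A (Mod L S :: ('b, 'f, 'r) struc set)"
  unfolding ec_in_def
proof (intro ballI allI impI)
  fix B :: "('b, 'f, 'r) struc" and h p e
  assume B: "B \<in> Mod L S" and emb: "embedding L h A B"
    and pe: "wf_fm L p \<and> existential p \<and> assignment A e" and sB: "sat B (h \<circ> e) p"
  show "sat A e p"
  proof (rule ccontr)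
    assume nA: "\<not> sat A e p"
    obtain ys q where q: "qfree q" "p = foldr Ex ys q" using pe by (auto simp: existential_def)
    have wfq: "wf_fm L q" using pe q wf_foldr_Ex by blast
    have "star B \<in> Mod (Lstar L) (lift_fm ` S \<union> empty_star L)"
      using B star_models by (simp add: Mod_def)
    with gc emb_hom[OF emb] have gch: "geom_closed_hom (Lstar L) h (star A) (star B)"
      by (simp add: gc_in_def)
    have each: "sat (star B) (h \<circ> e) (foldr All ys (Imp (conjs (fst (geo c))) (snd (geo c))))"
      if c: "c \<in> set (cnf False q)" for c
    proof -
      have ok: "\<forall>l\<in>set c. okat L (snd l)" using cnf_ok[OF wfq c] by blast
      have asg: "assignment (star A) e" using pe by (simp add: assignment_def)
      have "sat (star A) e (foldr All ys (Imp (conjs (fst (geo c))) (snd (geo c))))"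
        unfolding foldr_All_sat
      proof (intro allI impI)
        fix e' assume E: "(\<forall>v. v \<notin> set ys \<longrightarrow> e' v = e v) \<and> (\<forall>v\<in>set ys. e' v \<in> dom (star A))"
        have "\<not> sat A e' q" using nA E q(2) by (auto simp: foldr_Ex_sat)
        then have "cnfsat A e' (cnf False q)" using cnf_sat[OF q(1), of A e' False] by simp
        then have "clsat A e' c" using c by (simp add: cnfsat_def)
        then show "sat (star A) e' (Imp (conjs (fst (geo c))) (snd (geo c)))"
          using geo_sat[OF ok] by blast
      qed
      with gch geo_ok[OF ok] asg show ?thesis
        unfolding geom_closed_hom_def by blast
    qed
    from sB q(2) obtain e'' where E: "(\<forall>v. v \<notin> set ys \<longrightarrow> e'' v = (h \<circ> e) v) \<and> (\<forall>v\<in>set ys. e'' v \<in> dom B)"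
       and sq: "sat B e'' q" by (auto simp: foldr_Ex_sat)
    have "cnfsat B e'' (cnf False q)"
      unfolding cnfsat_def
    proof
      fix c assume c: "c \<in> set (cnf False q)"
      have ok: "\<forall>l\<in>set c. okat L (snd l)" using cnf_ok[OF wfq c] by blast
      from each[OF c] E have "sat (star B) e'' (Imp (conjs (fst (geo c))) (snd (geo c)))"
        by (simp add: foldr_All_sat)
      then show "clsat B e'' c" using geo_sat[OF ok] by blast
    qed
    then have "\<not> sat B e'' q" using cnf_sat[OF q(1), of B e'' False] by simp
    with sq show False by simp
  qed
qed


lemma coD:
  assumes "models (Lstar L) D (S \<union> empty_star L)"
    and "length xs = rarity L r" "set xs \<subseteq> dom D"
  shows "rint D (Co r) xs \<longleftrightarrow> \<not> rint D (Base r) xs"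
proof -
  obtain d0 where d0: "d0 \<in> dom D" using assms(1) by (auto simp: models_def is_struc_def)
  define e0 where "e0 = (\<lambda>n. if n < length xs then xs ! n else d0)"
  have asg: "assignment D e0" using d0 assms(3) by (auto simp: e0_def assignment_def)
  let ?ax = "foldr All [0..<rarity L r]
        (Iff (Neg (Rel (Base r) (map Var [0..<rarity L r])))
             (Rel (Co r) (map Var [0..<rarity L r])))"
  have "?ax \<in> empty_star L" by (auto simp: empty_star_def)
  then have "sat D e0 ?ax" using assms(1) asg by (auto simp: models_def)
  then have "sat D e0 (Iff (Neg (Rel (Base r) (map Var [0..<rarity L r])))
             (Rel (Co r) (map Var [0..<rarity L r])))"
    unfolding foldr_All_sat using asg by (auto simp: assignment_def)
  moreover have "map e0 [0..<rarity L r] = xs"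
    using assms(2) by (auto simp: e0_def intro: nth_equalityI)
  ultimately show ?thesis by (auto simp: Iff_def comp_def)
qed

lemma neqD:
  assumes "models (Lstar L) D (S \<union> empty_star L)"
    and "a \<in> dom D" "b \<in> dom D"
  shows "rint D NotEq [a, b] \<longleftrightarrow> a \<noteq> b"
proof -
  define e0 where "e0 = (\<lambda>n::nat. a)"
  have asg: "assignment D e0" using assms by (auto simp: e0_def assignment_def)
  let ?ax = "All 0 (All 1 (Iff (Neg (Eq (Var 0) (Var 1))) (Rel NotEq [Var 0, Var 1])))"
  have "?ax \<in> empty_star L" by (auto simp: empty_star_def)
  then have "sat D e0 ?ax" using assms(1) asg unfolding models_def by blast
  then have "sat D (e0(0 := a, 1 := b)) (Iff (Neg (Eq (Var 0) (Var 1))) (Rel NotEq [Var 0, Var 1]))"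
    using assms(2,3) by simp
  then show ?thesis by (auto simp: Iff_def)
qed

lemma ec_to_gc:
  assumes ec: "ec_in L A (Mod L S :: ('b, 'f, 'r) struc set)"
  shows "gc_in (Lstar L) (star A)
           (Mod (Lstar L) (lift_fm ` S \<union> empty_star L) :: ('b, 'f, 'r srel) struc set)"
  unfolding gc_in_def
proof (intro ballI allI impI)
  fix D :: "('b, 'f, 'r srel) struc" and h
  assume DK: "D \<in> Mod (Lstar L) (lift_fm ` S \<union> empty_star L)"
    and hom: "homomorphism (Lstar L) h (star A) D"
  have md: "models (Lstar L) D (lift_fm ` S \<union> empty_star L)" using DK by (simp add: Mod_def)
  have st: "is_struc (Lstar L) D" using md by (simp add: models_def)
  have co: "\<forall>r xs. length xs = rarity L r \<and> set xs \<subseteq> dom D \<longrightarrow> (rint D (Co r) xs \<longleftrightarrow> \<not> rint D (Base r) xs)"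
    using coD[OF md] by blast
  have ne: "\<forall>a\<in>dom D. \<forall>b\<in>dom D. rint D NotEq [a, b] \<longleftrightarrow> a \<noteq> b"
    using neqD[OF md] by blast
  have hdom: "h ` dom A \<subseteq> dom D" using hom by (simp add: homomorphism_def)
  have RK: "red D \<in> Mod L S"
  proof -
    have "is_struc L (red D)" using st by (simp add: is_struc_def red_def)
    moreover have "sat (red D) e p" if "p \<in> S" "assignment (red D) e" for p e
    proof -
      have "assignment D e" using that(2) by (simp add: assignment_def)
      then have "sat D e (lift_fm p)" using md that(1) by (simp add: models_def)
      then show ?thesis by (simp add: sat_lift)
    qed
    ultimately show ?thesis by (simp add: Mod_def models_def)
  qed
  have emb: "embedding L h A (red D)"
    unfolding embedding_def
  proof (intro conjI allI impI)
    show "h ` dom A \<subseteq> dom (red D)" using hdom by simp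
    show "inj_on h (dom A)"
    proof (rule inj_onI, rule ccontr)
      fix a b assume ab: "a \<in> dom A" "b \<in> dom A" "h a = h b" "a \<noteq> b"
      then have "rint (star A) NotEq [a, b]" by simp
      moreover have "length [a, b] = rarity (Lstar L) NotEq \<and> set [a, b] \<subseteq> dom (star A)"
        using ab by simp
      ultimately have "rint D NotEq (map h [a, b])" using hom unfolding homomorphism_def by blast
      with ne ab hdom show False by auto
    qed
    fix f xs assume "length xs = farity L f \<and> set xs \<subseteq> dom A"
    with hom show "h (fint A f xs) = fint (red D) f (map h xs)"
      by (simp add: homomorphism_def red_def)
  next
    fix r xs assume H: "length xs = rarity L r \<and> set xs \<subseteq> dom A"
    have mh: "set (map h xs) \<subseteq> dom D" using H hdom by auto
    show "rint (red D) r (map h xs) \<longleftrightarrow> rint A r xs"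
    proof
      assume "rint A r xs"
      then have "rint (star A) (Base r) xs" by simp
      with hom H show "rint (red D) r (map h xs)" by (auto simp: homomorphism_def)
    next
      assume R: "rint (red D) r (map h xs)"
      show "rint A r xs"
      proof (rule ccontr)
        assume "\<not> rint A r xs"
        then have "rint (star A) (Co r) xs" by simp
        with hom H have "rint D (Co r) (map h xs)" by (auto simp: homomorphism_def)
        with co mh H R show False by auto
      qed
    qed
  qed
  show "geom_closed_hom (Lstar L) h (star A) D"
    unfolding geom_closed_hom_def
  proof (intro conjI allI impI hom)
    fix ys Phi psi e
    assume at: "(\<forall>a\<in>set (psi # Phi). atomic a \<and> wf_fm (Lstar L) a) \<and> assignment (star A) e"
      and sA: "sat (star A) e (foldr All ys (Imp (conjs Phi) psi))"
    show "sat D (h \<circ> e) (foldr All ys (Imp (conjs Phi) psi))"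
    proof (rule ccontr)
      assume "\<not> sat D (h \<circ> e) (foldr All ys (Imp (conjs Phi) psi))"
      then obtain e'' where E: "\<forall>v. v \<notin> set ys \<longrightarrow> e'' v = (h \<circ> e) v" "\<forall>v\<in>set ys. e'' v \<in> dom D"
        and nI: "\<not> sat D e'' (Imp (conjs Phi) psi)"
        unfolding foldr_All_sat by blast
      have asgA: "assignment A e" using at by (simp add: assignment_def)
      have asgD: "assignment D e''"
        unfolding assignment_def
      proof
        fix v show "e'' v \<in> dom D"
        proof (cases "v \<in> set ys")
          case True then show ?thesis using E by auto
        next
          case False then show ?thesis using E hdom asgA by (auto simp: assignment_def)
        qed
      qed
      define q where "q = Conj (conjs (map tr Phi)) (Neg (tr psi))"
      have qf: "qfree q" by (simp add: q_def tr_qfree qfree_conjs)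
      have wq: "wf_fm L q" using at by (simp add: q_def tr_wf wf_conjs)
      have ex: "existential (foldr Ex ys q)" using qf by (auto simp: existential_def)
      have wp: "wf_fm L (foldr Ex ys q)" using wq by (induction ys) auto
      have trD: "\<forall>a\<in>set (psi # Phi). sat D e'' a = sat (red D) e'' (tr a)"
        using at tr_D[OF st co ne asgD] by blast
      have "sat (red D) e'' q" using nI trD by (auto simp: q_def sat_conjs)
      then have "sat (red D) (h \<circ> e) (foldr Ex ys q)"
        unfolding foldr_Ex_sat using E by auto
      with ec RK emb wp ex asgA have "sat A e (foldr Ex ys q)"
        unfolding ec_in_def by blast
      then obtain e' where E': "\<forall>v. v \<notin> set ys \<longrightarrow> e' v = e v" "\<forall>v\<in>set ys. e' v \<in> dom A"
        and sq: "sat A e' q" unfolding foldr_Ex_sat by blast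
      have "sat (star A) e' (Imp (conjs Phi) psi)"
        using sA E' unfolding foldr_All_sat by simp
      moreover have "\<forall>a\<in>set (psi # Phi). sat (star A) e' a = sat A e' (tr a)"
        using at tr_star by blast
      ultimately show False using sq by (auto simp: q_def sat_conjs)
    qed
  qed
qed

theorem theorem4p21:
  fixes L :: "('f, 'r) lang"
    and T :: "('f, 'r) fm set"
    and A :: "('a, 'f, 'r) struc"
  assumes "theory_of L T"
    and "models L A (Tforall L T)"
  shows "ec_in L A (Mod L (Tforall L T) :: ('b, 'f, 'r) struc set) \<longleftrightarrow>
         gc_in (Lstar L) (star A)
           (Mod (Lstar L) (lift_fm ` Tforall L T \<union> empty_star L) :: ('b, 'f, 'r srel) struc set)"
  using ec_to_gc gc_to_ec by blast

end
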